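(* For any positive integer $m$, any two words of length $m$ that are permutations of $\{1,2,\dots,m\}$ (i.e. each of $1,\dots,m$ occurs exactly once) are cyclic Knuth equivalent.
   Context: A word is a finite sequence of letters from a totally ordered alphabet (here the integers). A transformation of type $K'$ replaces three consecutive letters $yzx$ of a word with $x<y\le z$ by $yxz$. A transformation of type $K''$ replaces three consecutive letters $xzy$ with $x\le y<z$ by $zxy$. An elementary Knuth transformation is a transformation of type $K'$ or $K''$ or the inverse of one of these. The rotation $R$ moves the last letter of a word to the front (e.g. $3346354\mapsto4334635$). An elementary cyclic Knuth transformation is an elementary Knuth transformation or $R$; two words are cyclic Knuth equivalent if one can be obtained from the other by a finite sequence of elementary cyclic Knuth transformations. *)

theory Defs
  imports Main
begin

inductive knuthK1 :: "int list \<Rightarrow> int list \<Rightarrow> bool" where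
  "x < y \<Longrightarrow> y \<le> z \<Longrightarrow> knuthK1 (u @ [y, z, x] @ v) (u @ [y, x, z] @ v)"

inductive knuthK2 :: "int list \<Rightarrow> int list \<Rightarrow> bool" where
  "x \<le> y \<Longrightarrow> y < z \<Longrightarrow> knuthK2 (u @ [x, z, y] @ v) (u @ [z, x, y] @ v)"

definition rotR :: "int list \<Rightarrow> int list" where
  "rotR w = (if w = [] then [] else last w # butlast w)"

definition elem_cyc_knuth :: "int list \<Rightarrow> int list \<Rightarrow> bool" where
  "elem_cyc_knuth w w' \<longleftrightarrow>
     knuthK1 w w' \<or> knuthK2 w w' \<or> knuthK1 w' w \<or> knuthK2 w' w \<or> w' = rotR w"

definition cyc_knuth_equiv :: "int list \<Rightarrow> int list \<Rightarrow> bool" where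
  "cyc_knuth_equiv w w' \<longleftrightarrow> elem_cyc_knuth\<^sup>*\<^sup>* w w'"

end

theory Submission
  imports Defs "HOL-Library.Multiset"
begin

lemma ce_refl: "cyc_knuth_equiv w w" by (simp add: cyc_knuth_equiv_def)

lemma ce_trans: "cyc_knuth_equiv a b \<Longrightarrow> cyc_knuth_equiv b c \<Longrightarrow> cyc_knuth_equiv a c"
  unfolding cyc_knuth_equiv_def by (rule rtranclp_trans)

lemma ce_step: "elem_cyc_knuth a b \<Longrightarrow> cyc_knuth_equiv a b"
  unfolding cyc_knuth_equiv_def by (rule r_into_rtranclp)

lemma rotR_snoc: "rotR (xs @ [a]) = a # xs" by (simp add: rotR_def)

lemma rot_app: "cyc_knuth_equiv (xs @ ys) (ys @ xs)"
proof (induction ys arbitrary: xs rule: rev_induct)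
  case Nil show ?case by (simp add: ce_refl)
next
  case (snoc a ys)
  have "elem_cyc_knuth (xs @ ys @ [a]) ((a # xs) @ ys)"
    unfolding elem_cyc_knuth_def using rotR_snoc[of "xs @ ys" a] by simp
  then have 1: "cyc_knuth_equiv (xs @ ys @ [a]) ((a # xs) @ ys)" by (rule ce_step)
  have 2: "cyc_knuth_equiv ((a # xs) @ ys) (ys @ (a # xs))" by (rule snoc.IH)
  show ?case using ce_trans[OF 1 2] by simp
qed

lemma elem_sym: "elem_cyc_knuth a b \<Longrightarrow> cyc_knuth_equiv b a"
proof -
  assume h: "elem_cyc_knuth a b"
  show ?thesis
  proof (cases "b = rotR a")
    case True
    show ?thesis
    proof (cases "a = []")
      case True then show ?thesis using \<open>b = rotR a\<close> by (simp add: rotR_def ce_refl)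
    next
      case False
      then obtain xs c where a: "a = xs @ [c]" by (metis append_butlast_last_id)
      have "b = [c] @ xs" using \<open>b = rotR a\<close> a by (simp add: rotR_snoc)
      then show ?thesis using a rot_app[of "[c]" xs] by simp
    qed
  next
    case False
    then have "elem_cyc_knuth b a" using h unfolding elem_cyc_knuth_def by blast
    then show ?thesis by (rule ce_step)
  qed
qed

lemma ce_sym: "cyc_knuth_equiv a b \<Longrightarrow> cyc_knuth_equiv b a"
  unfolding cyc_knuth_equiv_def
proof (induction rule: rtranclp_induct)
  case base then show ?case by simp
next
  case (step b c)
  have "elem_cyc_knuth\<^sup>*\<^sup>* c b" using elem_sym[OF step(2)] unfolding cyc_knuth_equiv_def .
  then show ?case using step(3) by (rule rtranclp_trans)
qed

lemma elem_mset: "elem_cyc_knuth a b \<Longrightarrow> mset a = mset b"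
proof -
  assume h: "elem_cyc_knuth a b"
  show ?thesis
  proof (cases "b = rotR a")
    case True
    show ?thesis
    proof (cases "a = []")
      case True then show ?thesis using \<open>b = rotR a\<close> by (simp add: rotR_def)
    next
      case False
      then obtain xs c where a: "a = xs @ [c]" by (metis append_butlast_last_id)
      then show ?thesis using \<open>b = rotR a\<close> by (simp add: rotR_snoc)
    qed
  next
    case False
    then have "knuthK1 a b \<or> knuthK2 a b \<or> knuthK1 b a \<or> knuthK2 b a"
      using h unfolding elem_cyc_knuth_def by blast
    then show ?thesis
      by (auto elim!: knuthK1.cases knuthK2.cases simp: ac_simps)
  qed
qed

lemma ce_mset: "cyc_knuth_equiv a b \<Longrightarrow> mset a = mset b"
  unfolding cyc_knuth_equiv_def
  by (induction rule: rtranclp_induct) (auto dest: elem_mset)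

lemma marker_aux:
  "sorted B \<Longrightarrow> t < p \<Longrightarrow> \<forall>b\<in>set B. p \<le> b \<Longrightarrow>
   cyc_knuth_equiv (x @ [p, t] @ B) (x @ [p] @ B @ [t])"
proof (induction B arbitrary: p x)
  case Nil then show ?case by (simp add: ce_refl)
next
  case (Cons b B)
  have pb: "p \<le> b" using Cons.prems by simp
  have k: "knuthK1 (x @ [p, b, t] @ B) (x @ [p, t, b] @ B)"
    using knuthK1.intros[where x=t and y=p and z=b and u=x and v=B] Cons.prems pb by simp
  then have 1: "cyc_knuth_equiv (x @ [p, t] @ b # B) ((x @ [p]) @ [b, t] @ B)"
    by (intro ce_step) (simp add: elem_cyc_knuth_def)
  have 2: "cyc_knuth_equiv ((x @ [p]) @ [b, t] @ B) ((x @ [p]) @ [b] @ B @ [t])"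
    using Cons.prems pb by (intro Cons.IH) auto
  show ?case using ce_trans[OF 1 2] by simp
qed

lemma marker:
  "sorted B \<Longrightarrow> t < p \<Longrightarrow> \<forall>b\<in>set B. p \<le> b \<Longrightarrow>
   cyc_knuth_equiv (x @ [p, t] @ B) ([t] @ x @ [p] @ B)"
proof -
  assume h: "sorted B" "t < p" "\<forall>b\<in>set B. p \<le> b"
  have 1: "cyc_knuth_equiv (x @ [p, t] @ B) ((x @ [p] @ B) @ [t])" using marker_aux[OF h] by simp
  show ?thesis using ce_trans[OF 1 rot_app[of "x @ [p] @ B" "[t]"]] by simp
qed

lemma kcross: "a < b \<Longrightarrow> b < k \<Longrightarrow> cyc_knuth_equiv (y @ [k, a, b] @ r) (y @ [a, k, b] @ r)"
proof -
  assume "a < b" "b < k"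
  then have "knuthK2 (y @ [a, k, b] @ r) (y @ [k, a, b] @ r)"
    using knuthK2.intros[where x=a and y=b and z=k and u=y and v=r] by simp
  then show ?thesis by (intro ce_step) (simp add: elem_cyc_knuth_def)
qed

lemma ascent_front:
  "distinct (pre @ [a, b] @ post) \<Longrightarrow> a < b \<Longrightarrow>
   \<exists>z'. cyc_knuth_equiv (P @ (pre @ [a, b] @ post) @ S) (P @ z' @ S)
      \<and> mset z' = mset (pre @ [a, b] @ post) \<and> (\<exists>c d r. z' = c # d # r \<and> c < d)"
proof (induction pre arbitrary: a b post rule: rev_induct)
  case Nil
  then show ?case by (intro exI[of _ "a # b # post"]) (auto simp: ce_refl)
next
  case (snoc c pre)
  have eq: "(pre @ [c]) @ [a, b] @ post = pre @ [c, a] @ (b # post)" by simp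
  show ?case
  proof (cases "c < a")
    case True
    from snoc.IH[of c a "b # post"] snoc.prems True show ?thesis by (simp only: eq)
  next
    case False
    have "c \<noteq> a" "c \<noteq> b" using snoc.prems by auto
    then have ac: "a < c" using False by simp
    show ?thesis
    proof (cases "c < b")
      case True
      have "knuthK1 ((P @ pre) @ [c, b, a] @ (post @ S)) ((P @ pre) @ [c, a, b] @ (post @ S))"
        using knuthK1.intros[where x=a and y=c and z=b and u="P @ pre" and v="post @ S"] ac True by simp
      then have 1: "cyc_knuth_equiv (P @ ((pre @ [c]) @ [a, b] @ post) @ S) (P @ (pre @ [c, b] @ (a # post)) @ S)"
        by (intro ce_step) (simp add: elem_cyc_knuth_def)
      obtain z' where z': "cyc_knuth_equiv (P @ (pre @ [c, b] @ (a # post)) @ S) (P @ z' @ S)"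
        "mset z' = mset (pre @ [c, b] @ (a # post))" "\<exists>c d r. z' = c # d # r \<and> c < d"
        using snoc.IH[of c b "a # post"] snoc.prems True by auto
      show ?thesis using ce_trans[OF 1 z'(1)] z'(2,3) by (intro exI[of _ z']) (simp add: ac_simps)
    next
      case False
      then have bc: "b < c" using \<open>c \<noteq> b\<close> by simp
      have "knuthK2 ((P @ pre) @ [a, c, b] @ (post @ S)) ((P @ pre) @ [c, a, b] @ (post @ S))"
        using knuthK2.intros[where x=a and y=b and z=c and u="P @ pre" and v="post @ S"] snoc.prems bc by simp
      then have 1: "cyc_knuth_equiv (P @ ((pre @ [c]) @ [a, b] @ post) @ S) (P @ (pre @ [a, c] @ (b # post)) @ S)"
        by (intro ce_step) (simp add: elem_cyc_knuth_def)
      obtain z' where z': "cyc_knuth_equiv (P @ (pre @ [a, c] @ (b # post)) @ S) (P @ z' @ S)"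
        "mset z' = mset (pre @ [a, c] @ (b # post))" "\<exists>c d r. z' = c # d # r \<and> c < d"
        using snoc.IH[of a c "b # post"] snoc.prems ac by auto
      show ?thesis using ce_trans[OF 1 z'(1)] z'(2,3) by (intro exI[of _ z']) (simp add: ac_simps)
    qed
  qed
qed


lemma bring:
  assumes B: "sorted B" "\<forall>b\<in>set B. k < b"
  shows "distinct z \<Longrightarrow> \<forall>a\<in>set z. a < k \<Longrightarrow>
    \<exists>y'. cyc_knuth_equiv (y @ [k] @ z @ B) (y' @ [k] @ B) \<and> mset y' = mset y + mset z"
proof (induction "length z" arbitrary: y z rule: less_induct)
  case less
  have kB: "\<forall>b\<in>set B. k \<le> b" using B(2) by force
  have cs: "z = [] \<or> (\<exists>t. z = [t]) \<or> (\<exists>z'' s t. z = z'' @ [s, t])"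
  proof (cases z rule: rev_cases)
    case Nil then show ?thesis by simp
  next
    case (snoc ys t)
    then show ?thesis by (cases ys rule: rev_cases) auto
  qed
  show ?case
  proof -
    { assume "z = []"
      then have ?thesis by (intro exI[of _ y]) (simp add: ce_refl) }
    moreover
    { fix t assume zt: "z = [t]"
      then have "t < k" using less.prems by simp
      then have "cyc_knuth_equiv (y @ [k, t] @ B) ([t] @ y @ [k] @ B)"
        using marker[OF B(1) _ kB] by simp
      then have ?thesis using zt by (intro exI[of _ "t # y"]) simp }
    moreover
    { fix z'' s t assume zst: "z = z'' @ [s, t]"
      have sk: "s < k" "t < k" using less.prems zst by auto
      have "s \<noteq> t" using less.prems zst by auto
      then consider "t < s" | "s < t" by linarith
      then have ?thesis
      proof cases
        case 1
        have sB: "\<forall>b\<in>set B. s \<le> b" using kB sk by force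
        have "cyc_knuth_equiv ((y @ [k] @ z'') @ [s, t] @ B) ([t] @ (y @ [k] @ z'') @ [s] @ B)"
          using marker[OF B(1) 1 sB] .
        then have m1: "cyc_knuth_equiv (y @ [k] @ z @ B) ((t # y) @ [k] @ (z'' @ [s]) @ B)"
          using zst by simp
        obtain y'' where y'': "cyc_knuth_equiv ((t # y) @ [k] @ (z'' @ [s]) @ B) (y'' @ [k] @ B)"
          "mset y'' = mset (t # y) + mset (z'' @ [s])"
          using less.hyps[of "z'' @ [s]" "t # y"] less.prems zst by auto
        show ?thesis using ce_trans[OF m1 y''(1)] y''(2) zst
          by (intro exI[of _ y'']) (simp add: ac_simps)
      next
        case 2
        have dz: "distinct (z'' @ [s, t] @ [])" using less.prems zst by simp
        obtain z' where z': "cyc_knuth_equiv ((y @ [k]) @ (z'' @ [s, t] @ []) @ B) ((y @ [k]) @ z' @ B)"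
          "mset z' = mset (z'' @ [s, t] @ [])" "\<exists>c d r. z' = c # d # r \<and> c < d"
          using ascent_front[OF dz 2] by blast
        obtain c d r where cdr: "z' = c # d # r" "c < d" using z'(3) by blast
        have mz: "mset z' = mset z" using z'(2) zst by simp
        have sz: "set z' = set z" using mz by (metis set_mset_mset)
        have lz: "length z' = length z" using mz by (metis size_mset)
        have dz': "distinct z'" using mz less.prems by (metis mset_eq_imp_distinct_iff)
        have dk: "d < k" using sz cdr less.prems by auto
        have m1: "cyc_knuth_equiv (y @ [k] @ z @ B) (y @ [k, c, d] @ (r @ B))"
          using z'(1) zst cdr by simp
        have m2: "cyc_knuth_equiv (y @ [k, c, d] @ (r @ B)) ((y @ [c]) @ [k] @ (d # r) @ B)"
          using kcross[OF cdr(2) dk] by simp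
        obtain y'' where y'': "cyc_knuth_equiv ((y @ [c]) @ [k] @ (d # r) @ B) (y'' @ [k] @ B)"
          "mset y'' = mset (y @ [c]) + mset (d # r)"
          using less.hyps[of "d # r" "y @ [c]"] lz cdr dz' sz less.prems by auto
        show ?thesis using ce_trans[OF ce_trans[OF m1 m2] y''(1)] y''(2) mz cdr
          by (intro exI[of _ y'']) (simp add: ac_simps)
      qed }
    ultimately show ?thesis using cs by blast
  qed
qed

lemma full:
  "j \<le> n \<Longrightarrow> distinct x \<Longrightarrow> set x = {1..int j} \<Longrightarrow>
   cyc_knuth_equiv (x @ [int j + 1..int n]) [1..int n]"
proof (induction j arbitrary: x)
  case 0
  then have "x = []" by simp
  then show ?case by (simp add: ce_refl)
next
  case (Suc j)
  define k where "k = int j + 1"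
  define B where "B = [int j + 2..int n]"
  have kx: "k \<in> set x" using Suc.prems k_def by simp
  obtain y z where x: "x = y @ k # z" using split_list[OF kx] by blast
  have sB: "sorted B" "\<forall>b\<in>set B. k < b" unfolding B_def k_def by auto
  have dz: "distinct z" using Suc.prems x by simp
  have zk: "\<forall>a\<in>set z. a < k"
  proof
    fix a assume a: "a \<in> set z"
    then have "a \<in> set x" using x by simp
    then have "a \<in> {1..int (Suc j)}" using Suc.prems(3) by blast
    then have "a \<in> {1..k}" using k_def by simp
    moreover have "a \<noteq> k" using a Suc.prems x by auto
    ultimately show "a < k" by simp
  qed
  obtain y' where y': "cyc_knuth_equiv (y @ [k] @ z @ B) (y' @ [k] @ B)" "mset y' = mset y + mset z"
    using bring[OF sB dz zk] by blast
  have "mset y' = mset (y @ z)" using y'(2) by simp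
  then have sy: "set y' = set (y @ z)" and dy: "distinct y' = distinct (y @ z)"
    by (metis set_mset_mset) (metis mset_eq_imp_distinct_iff \<open>mset y' = mset (y @ z)\<close>)
  have "distinct (y @ z)" "k \<notin> set (y @ z)" using Suc.prems x by auto
  have e1: "set (y @ z) = set x - {k}" using x \<open>k \<notin> set (y @ z)\<close> by auto
  have e2: "set x - {k} = {1..int j}" using Suc.prems(3) k_def by auto
  have d': "distinct y'" using dy \<open>distinct (y @ z)\<close> by simp
  have s': "set y' = {1..int j}" using sy e1 e2 by simp
  have IH: "cyc_knuth_equiv (y' @ [int j + 1..int n]) [1..int n]"
    using Suc.IH[OF _ d' s'] Suc.prems by simp
  have up: "[int j + 1..int n] = k # B" unfolding k_def B_def using Suc.prems
    by (subst upto_rec1) (auto simp: add.commute)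
  have "cyc_knuth_equiv (x @ [int (Suc j) + 1..int n]) (y' @ [k] @ B)"
  proof -
    have eqi: "int (Suc j) + 1 = int j + 2" by simp
    show ?thesis using y'(1) x unfolding B_def k_def eqi by simp
  qed
  then show ?case using ce_trans[OF _ IH] up by simp
qed

theorem mainTheorem10:
  fixes m :: nat and u w :: "int list"
  assumes "m > 0"
    and "length u = m" and "distinct u" and "set u = {1..int m}"
    and "length w = m" and "distinct w" and "set w = {1..int m}"
  shows "cyc_knuth_equiv u w"
proof -
  have 1: "cyc_knuth_equiv u [1..int m]" using full[of m m u] assms by simp
  have 2: "cyc_knuth_equiv w [1..int m]" using full[of m m w] assms by simp
  show ?thesis using ce_trans[OF 1 ce_sym[OF 2]] .
qed

end
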